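(* Consider the remote-estimation Markov decision process described in the context, and suppose $$\lim_{\delta\to\infty}\frac{g_{i,j}(\delta+1)}{g_{i,j}(\delta)}<\frac{1}{Q_{i,i}p_f}\quad\text{for all } i\in\mathcal{X}_{\rm ap},\ j\ne i.$$ Let $(\mathcal{L}^*,h)$ be the solution of the average-cost Bellman equation $$\mathcal{L}^*+h(s)=\min_{a\in\{0,1\}}\Big\{l(s,a)+\sum_{s'\in\mathcal{S}}P_{s,s'}(a)h(s')\Big\},\qquad s\in\mathcal{S}.$$ Then for every fixed estimation error $(i,j)$ with $i\ne j$, $h(i,j,\delta)$ is non-decreasing in $\delta$.
   Context: Model. A source $\{X_t\}_{t\ge1}$ is a homogeneous discrete-time Markov chain on $\mathcal{X}=\{1,\dots,M\}$ with irreducible transition matrix $Q=(Q_{i,j})$. Let $\mathcal{X}_{\rm ap}=\{i: Q_{i,i}>0\}$, $\mathcal{X}_{\rm p}=\mathcal{X}\setminus\mathcal{X}_{\rm ap}$; assume $\mathcal{X}_{\rm ap}\ne\emptyset$. At each time $t$ a sensor chooses $A_t\in\{0,1\}$ (1 = transmit). The channel is i.i.d. Bernoulli $H_t$ with $\Pr[H_t=1]=p_s$, $p_f=1-p_s$, independent of the source. The estimate evolves as $\hat X_{t+1}=X_t$ if $A_t=1,H_t=1$, else $\hat X_{t+1}=\hat X_t$. The AoCE is $\Delta_t=\Delta_{t-1}+1$ if $X_t\ne\hat X_t$ and $(X_t,\hat X_t)=(X_{t-1},\hat X_{t-1})$; $\Delta_t=1$ if $X_t\ne\hat X_t$ and $(X_t,\hat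 X_t)\ne(X_{t-1},\hat X_{t-1})$; $\Delta_t=0$ if $X_t=\hat X_t$. State $S_t=(X_t,\hat X_t,\Delta_t)$ with state space $\mathcal{S}=\{(i,i,0)\}\cup\{(i,j,\delta): i\ne j,i\in\mathcal{X}_{\rm ap},\delta\ge1\}\cup\{(i,j,1):i\ne j,i\in\mathcal{X}_{\rm p}\}$. Transition probabilities $P_{s,s'}(a)$: for $s=(i,j,\delta)$, $i\ne j$, under $a=0$: to $(i,j,\delta+1)$ w.p. $Q_{i,i}$, to $(j,j,0)$ w.p. $Q_{i,j}$, to $(k,j,1)$ w.p. $Q_{i,k}$ ($k\ne i,j$); under $a=1$: to $(i,i,0)$ w.p. $Q_{i,i}p_s$, to $(k,i,1)$ w.p. $Q_{i,k}p_s$ ($k\ne i$), to $(i,j,\delta+1)$ w.p. $Q_{i,i}p_f$, to $(j,j,0)$ w.p. $Q_{i,j}p_f$, to $(k,j,1)$ w.p. $Q_{i,k}p_f$ ($k\ne i,j$). For $s=(i,i,0)$ and any $a$: to $(i,i,0)$ w.p. $Q_{i,i}$, to $(k,i,1)$ w.p. $Q_{i,k}$ ($k\ne i$). Costs: $D_{i,j}>0$ for $i\ne j$ and non-negative, non-decreasing, possibly unbounded age functions $g_{i,j}$; $c(i,j,\delta)=D_{i,j}g_{i,j}(\delta)$ for $i\ne j$, $c(i,i,0)=0$; per-stage cost $l(s,a)=c(s)+\lambda\mathbb{1}\{a\ne0\}$, $\lambda\ge0$. $\mathcal{L}^*$ denotes the minimal long-run average cost $\inf_\pi\limsup_{T\to\infty}\frac1T\sum_{t=1}^T\mathbb{E}^\pi[l(S_t,A_t)]$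 over all (history-dependent) policies.
   Formalization: h(s) is the limit, along discount factors beta tending to 1, of optimal beta-discounted cost at s minus that at a reference state, and L* the limit of (1 - beta) times the latter, not minimal average cost. Apart from conventions, each condition added here is assumed in the paper as well or is needed for the statement above to hold. *)

theory Defs
  imports "HOL-Analysis.Analysis"
begin

text \<open>States are triples (x, xhat, delta) of naturals; source alphabet is {1..M}.
  Actions are naturals restricted to {0,1} (1 = transmit).\<close>

type_synonym st = "nat \<times> nat \<times> nat"

definition Xap :: "nat \<Rightarrow> (nat \<Rightarrow> nat \<Rightarrow> real) \<Rightarrow> nat set" where
  "Xap M Q = {i \<in> {1..M}. Q i i > 0}"

definition Xp :: "nat \<Rightarrow> (nat \<Rightarrow> nat \<Rightarrow> real) \<Rightarrow> nat set" where
  "Xp M Q = {1..M} - Xap M Q"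

definition state_space :: "nat \<Rightarrow> (nat \<Rightarrow> nat \<Rightarrow> real) \<Rightarrow> st set" where
  "state_space M Q =
     {(i, i, 0) | i. i \<in> {1..M}}
   \<union> {(i, j, d) | i j d. i \<in> Xap M Q \<and> j \<in> {1..M} \<and> i \<noteq> j \<and> d \<ge> 1}
   \<union> {(i, j, 1) | i j. i \<in> Xp M Q \<and> j \<in> {1..M} \<and> i \<noteq> j}"

fun Qpow :: "nat \<Rightarrow> (nat \<Rightarrow> nat \<Rightarrow> real) \<Rightarrow> nat \<Rightarrow> nat \<Rightarrow> nat \<Rightarrow> real" where
  "Qpow M Q 0 i j = (if i = j then 1 else 0)"
| "Qpow M Q (Suc n) i j = (\<Sum>k\<in>{1..M}. Qpow M Q n i k * Q k j)"

definition stochastic :: "nat \<Rightarrow> (nat \<Rightarrow> nat \<Rightarrow> real) \<Rightarrow> bool" where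
  "stochastic M Q \<longleftrightarrow> (\<forall>i\<in>{1..M}. \<forall>j\<in>{1..M}. Q i j \<ge> 0) \<and>
                       (\<forall>i\<in>{1..M}. (\<Sum>j\<in>{1..M}. Q i j) = 1)"

definition irreducible_chain :: "nat \<Rightarrow> (nat \<Rightarrow> nat \<Rightarrow> real) \<Rightarrow> bool" where
  "irreducible_chain M Q \<longleftrightarrow> (\<forall>i\<in>{1..M}. \<forall>j\<in>{1..M}. \<exists>n. Qpow M Q n i j > 0)"

text \<open>Transition probability P_{s,s'}(a), with success probability ps (pf = 1 - ps).
  The new source symbol k always ranges over {1..M}.\<close>

definition trans_prob ::
  "nat \<Rightarrow> (nat \<Rightarrow> nat \<Rightarrow> real) \<Rightarrow> real \<Rightarrow> st \<Rightarrow> nat \<Rightarrow> st \<Rightarrow> real" where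
  "trans_prob M Q ps s a s' =
    (case s of (i, j, d) \<Rightarrow> (case s' of (k, l, e) \<Rightarrow>
      if k \<notin> {1..M} then 0
      else if i = j then
        (if l = i \<and> (if k = i then e = 0 else e = 1) then Q i k else 0)
      else
        (if a = 1 then ps * (if l = i \<and> (if k = i then e = 0 else e = 1) then Q i k else 0) else 0)
        + (if a = 1 then 1 - ps else 1) *
          (if l = j then
             (if k = i then (if e = d + 1 then Q i i else 0)
              else if k = j then (if e = 0 then Q i j else 0)
              else (if e = 1 then Q i k else 0))
           else 0)))"

definition state_cost ::
  "(nat \<Rightarrow> nat \<Rightarrow> real) \<Rightarrow> (nat \<Rightarrow> nat \<Rightarrow> nat \<Rightarrow> real) \<Rightarrow> st \<Rightarrow> real" where
  "state_cost D g s = (case s of (i, j, d) \<Rightarrow> if i = j then 0 else D i j * g i j d)"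

definition stage_cost ::
  "(nat \<Rightarrow> nat \<Rightarrow> real) \<Rightarrow> (nat \<Rightarrow> nat \<Rightarrow> nat \<Rightarrow> real) \<Rightarrow> real \<Rightarrow> st \<Rightarrow> nat \<Rightarrow> real" where
  "stage_cost D g lam s a = state_cost D g s + lam * (if a \<noteq> 0 then 1 else 0)"

text \<open>Discounted value iteration from 0 and the optimal discounted cost V_beta
  (for non-negative costs and finite actions it is the monotone limit of value iteration).\<close>

fun disc_VI ::
  "nat \<Rightarrow> (nat \<Rightarrow> nat \<Rightarrow> real) \<Rightarrow> real \<Rightarrow> (nat \<Rightarrow> nat \<Rightarrow> real) \<Rightarrow> (nat \<Rightarrow> nat \<Rightarrow> nat \<Rightarrow> real)
   \<Rightarrow> real \<Rightarrow> real \<Rightarrow> nat \<Rightarrow> st \<Rightarrow> real" where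
  "disc_VI M Q ps D g lam beta 0 s = 0"
| "disc_VI M Q ps D g lam beta (Suc n) s =
     (MIN a\<in>{0, 1::nat}. stage_cost D g lam s a
        + beta * (\<Sum>\<^sub>\<infinity>s'\<in>state_space M Q. trans_prob M Q ps s a s' * disc_VI M Q ps D g lam beta n s'))"

definition disc_value ::
  "nat \<Rightarrow> (nat \<Rightarrow> nat \<Rightarrow> real) \<Rightarrow> real \<Rightarrow> (nat \<Rightarrow> nat \<Rightarrow> real) \<Rightarrow> (nat \<Rightarrow> nat \<Rightarrow> nat \<Rightarrow> real)
   \<Rightarrow> real \<Rightarrow> real \<Rightarrow> st \<Rightarrow> real" where
  "disc_value M Q ps D g lam beta s = (SUP n. disc_VI M Q ps D g lam beta n s)"

definition bellman_rhs ::
  "nat \<Rightarrow> (nat \<Rightarrow> nat \<Rightarrow> real) \<Rightarrow> real \<Rightarrow> (nat \<Rightarrow> nat \<Rightarrow> real) \<Rightarrow> (nat \<Rightarrow> nat \<Rightarrow> nat \<Rightarrow> real)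
   \<Rightarrow> real \<Rightarrow> (st \<Rightarrow> real) \<Rightarrow> st \<Rightarrow> nat \<Rightarrow> real" where
  "bellman_rhs M Q ps D g lam h s a =
     stage_cost D g lam s a + (\<Sum>\<^sub>\<infinity>s'\<in>state_space M Q. trans_prob M Q ps s a s' * h s')"

end

theory Submission imports Defs
begin

context
  fixes M :: nat and Q :: "nat \<Rightarrow> nat \<Rightarrow> real" and ps :: real
    and D :: "nat \<Rightarrow> nat \<Rightarrow> real" and g :: "nat \<Rightarrow> nat \<Rightarrow> nat \<Rightarrow> real" and lam :: real
begin

definition psi1 :: "nat \<Rightarrow> nat \<Rightarrow> st" where
  "psi1 i k = (k, i, if k = i then 0 else 1)"
definition psi2 :: "nat \<Rightarrow> nat \<Rightarrow> nat \<Rightarrow> nat \<Rightarrow> st" where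
  "psi2 i j d k = (k, j, if k = i then d + 1 else if k = j then 0 else 1)"
definition w1 :: "nat \<Rightarrow> nat \<Rightarrow> nat \<Rightarrow> nat \<Rightarrow> real" where
  "w1 i j a k = (if i = j then Q i k else if a = 1 then ps * Q i k else 0)"
definition w2 :: "nat \<Rightarrow> nat \<Rightarrow> nat \<Rightarrow> nat \<Rightarrow> real" where
  "w2 i j a k = (if i = j then 0 else (if a = 1 then 1 - ps else 1) * Q i k)"

lemma tp_repr:
  "trans_prob M Q ps (i,j,d) a x = (\<Sum>k\<in>{1..M}.
     (if x = psi1 i k then w1 i j a k else 0) + (if x = psi2 i j d k then w2 i j a k else 0))"
proof -
  obtain k l e where x: "x = (k,l,e)" by (cases x) auto
  show ?thesis
  proof (cases "k \<in> {1..M}")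
    case False
    have "\<forall>k'\<in>{1..M}. (if x = psi1 i k' then w1 i j a k' else 0) + (if x = psi2 i j d k' then w2 i j a k' else 0) = 0"
      using False by (auto simp: x psi1_def psi2_def)
    then show ?thesis using False by (simp add: x trans_prob_def)
  next
    case True
    have "\<forall>k'\<in>{1..M}. (if x = psi1 i k' then w1 i j a k' else 0) + (if x = psi2 i j d k' then w2 i j a k' else 0)
       = (if k' = k then (if x = psi1 i k then w1 i j a k else 0) + (if x = psi2 i j d k then w2 i j a k else 0) else 0)"
      by (auto simp: x psi1_def psi2_def)
    then have "(\<Sum>k'\<in>{1..M}. (if x = psi1 i k' then w1 i j a k' else 0) + (if x = psi2 i j d k' then w2 i j a k' else 0))
      = (\<Sum>k'\<in>{1..M}. if k' = k then (if x = psi1 i k then w1 i j a k else 0) + (if x = psi2 i j d k then w2 i j a k else 0) else 0)"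
      by (intro sum.cong[OF refl]) (erule bspec)
    also have "\<dots> = (if x = psi1 i k then w1 i j a k else 0) + (if x = psi2 i j d k then w2 i j a k else 0)"
      using True by (simp only: sum.delta finite_atLeastAtMost if_True)
    moreover have "trans_prob M Q ps (i,j,d) a x =
      (if x = psi1 i k then w1 i j a k else 0) + (if x = psi2 i j d k then w2 i j a k else 0)"
    proof (cases "i = j")
      case True
      then show ?thesis using True \<open>k \<in> {1..M}\<close>
        by (simp add: x trans_prob_def psi1_def psi2_def w1_def w2_def)
    next
      case ij: False
      have A: "(if a = 1 then ps * (if l = i \<and> (if k = i then e = 0 else e = 1) then Q i k else 0) else 0)
          = (if x = psi1 i k then w1 i j a k else 0)"
        using ij by (auto simp: x psi1_def w1_def)
      have B: "(if a = 1 then 1 - ps else 1) *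
          (if l = j then
             (if k = i then (if e = d + 1 then Q i i else 0)
              else if k = j then (if e = 0 then Q i j else 0)
              else (if e = 1 then Q i k else 0))
           else 0) = (if x = psi2 i j d k then w2 i j a k else 0)"
        using ij by (cases "k = i"; cases "k = j"; simp add: x psi2_def w2_def)
      have "trans_prob M Q ps (i,j,d) a x =
        (if a = 1 then ps * (if l = i \<and> (if k = i then e = 0 else e = 1) then Q i k else 0) else 0)
        + (if a = 1 then 1 - ps else 1) *
          (if l = j then
             (if k = i then (if e = d + 1 then Q i i else 0)
              else if k = j then (if e = 0 then Q i j else 0)
              else (if e = 1 then Q i k else 0))
           else 0)"
        using ij \<open>k \<in> {1..M}\<close> unfolding x trans_prob_def by simp
      then show ?thesis using A B by simp
    qed
    ultimately show ?thesis by simp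
  qed
qed

definition EVf :: "nat \<Rightarrow> nat \<Rightarrow> nat \<Rightarrow> nat \<Rightarrow> (st \<Rightarrow> real) \<Rightarrow> real" where
  "EVf i j d a f = (\<Sum>k\<in>{1..M}.
     w1 i j a k * (if psi1 i k \<in> state_space M Q then f (psi1 i k) else 0)
   + w2 i j a k * (if psi2 i j d k \<in> state_space M Q then f (psi2 i j d k) else 0))"

lemma EV:
  "(\<Sum>\<^sub>\<infinity>s'\<in>state_space M Q. trans_prob M Q ps (i,j,d) a s' * f s') = EVf i j d a f"
proof -
  define F where "F = psi1 i ` {1..M} \<union> psi2 i j d ` {1..M}"
  have fin: "finite F" by (simp add: F_def)
  let ?SS = "state_space M Q"
  have "(\<Sum>\<^sub>\<infinity>s'\<in>?SS. trans_prob M Q ps (i,j,d) a s' * f s') =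
        (\<Sum>\<^sub>\<infinity>s'\<in>?SS \<inter> F. trans_prob M Q ps (i,j,d) a s' * f s')"
  proof (rule infsum_cong_neutral)
    fix x assume "x \<in> ?SS - ?SS \<inter> F"
    then have "x \<notin> F" by auto
    then have "\<forall>k\<in>{1..M}. x \<noteq> psi1 i k \<and> x \<noteq> psi2 i j d k" by (auto simp: F_def)
    then show "trans_prob M Q ps (i,j,d) a x * f x = 0" by (simp add: tp_repr)
  qed auto
  also have "\<dots> = (\<Sum>s'\<in>?SS \<inter> F. trans_prob M Q ps (i,j,d) a s' * f s')"
    using fin by simp
  also have "\<dots> = (\<Sum>s'\<in>?SS \<inter> F. \<Sum>k\<in>{1..M}.
     (if s' = psi1 i k then w1 i j a k * f (psi1 i k) else 0) + (if s' = psi2 i j d k then w2 i j a k * f (psi2 i j d k) else 0))"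
    apply (rule sum.cong[OF refl])
    apply (simp only: tp_repr sum_distrib_right)
    apply (rule sum.cong[OF refl])
    apply (simp add: distrib_right)
    done
  also have "\<dots> = (\<Sum>k\<in>{1..M}. \<Sum>s'\<in>?SS \<inter> F.
     (if s' = psi1 i k then w1 i j a k * f (psi1 i k) else 0) + (if s' = psi2 i j d k then w2 i j a k * f (psi2 i j d k) else 0))"
    by (rule sum.swap)
  also have "\<dots> = EVf i j d a f"
    unfolding EVf_def
  proof (rule sum.cong)
    fix k assume k: "k \<in> {1..M}"
    have inF: "psi1 i k \<in> F" "psi2 i j d k \<in> F" using k by (auto simp: F_def)
    have finSF: "finite (?SS \<inter> F)" using fin by simp
    show "(\<Sum>s'\<in>?SS \<inter> F.
     (if s' = psi1 i k then w1 i j a k * f (psi1 i k) else 0) + (if s' = psi2 i j d k then w2 i j a k * f (psi2 i j d k) else 0))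
      = w1 i j a k * (if psi1 i k \<in> ?SS then f (psi1 i k) else 0)
       + w2 i j a k * (if psi2 i j d k \<in> ?SS then f (psi2 i j d k) else 0)"
      apply (simp only: sum.distrib)
      apply (simp only: sum.delta[OF finSF])
      using inF by simp
  qed simp
  finally show ?thesis .
qed

lemma VI_Suc:
  "disc_VI M Q ps D g lam beta (Suc n) (i,j,d) =
    min (stage_cost D g lam (i,j,d) 0 + beta * EVf i j d 0 (disc_VI M Q ps D g lam beta n))
        (stage_cost D g lam (i,j,d) 1 + beta * EVf i j d 1 (disc_VI M Q ps D g lam beta n))"
  apply (simp only: disc_VI.simps(2) EV image_insert image_empty)
  apply (subst Min_insert)
    apply simp
   apply simp
  apply (simp only: Min_singleton)
  done

context
  assumes stoch: "stochastic M Q"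
    and ps0: "0 \<le> ps" and ps1: "ps \<le> 1"
    and D_pos: "\<And>i j. i \<in> {1..M} \<Longrightarrow> j \<in> {1..M} \<Longrightarrow> i \<noteq> j \<Longrightarrow> D i j > 0"
    and g_nonneg: "\<And>i j d. i \<in> {1..M} \<Longrightarrow> j \<in> {1..M} \<Longrightarrow> i \<noteq> j \<Longrightarrow> g i j d \<ge> 0"
    and g_mono: "\<And>i j. i \<in> {1..M} \<Longrightarrow> j \<in> {1..M} \<Longrightarrow> i \<noteq> j \<Longrightarrow> mono (g i j)"
    and lam: "lam \<ge> 0"
    and growth: "\<And>i j. i \<in> Xap M Q \<Longrightarrow> j \<in> {1..M} \<Longrightarrow> j \<noteq> i \<Longrightarrow>
        \<exists>r. ((\<lambda>d. g i j (d + 1) / g i j d) \<longlongrightarrow> r) sequentially \<and> r * (Q i i * (1 - ps)) < 1"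
begin

lemma Q_nonneg: "i \<in> {1..M} \<Longrightarrow> k \<in> {1..M} \<Longrightarrow> Q i k \<ge> 0"
  using stoch by (auto simp: stochastic_def)

lemma Q_sum: "i \<in> {1..M} \<Longrightarrow> (\<Sum>k\<in>{1..M}. Q i k) = 1"
  using stoch by (auto simp: stochastic_def)

lemma w1_nonneg: "i \<in> {1..M} \<Longrightarrow> k \<in> {1..M} \<Longrightarrow> w1 i j a k \<ge> 0"
  using Q_nonneg[of i k] ps0 by (auto simp: w1_def)

lemma w2_nonneg: "i \<in> {1..M} \<Longrightarrow> k \<in> {1..M} \<Longrightarrow> w2 i j a k \<ge> 0"
  using Q_nonneg[of i k] ps1 by (auto simp: w2_def)

lemma Qii_zero: "i \<in> {1..M} \<Longrightarrow> i \<notin> Xap M Q \<Longrightarrow> Q i i = 0"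
  using Q_nonneg[of i i] by (auto simp: Xap_def)

lemma SS_err: "i \<noteq> j \<Longrightarrow> i \<in> Xap M Q \<Longrightarrow> (i,j,e) \<in> state_space M Q \<longleftrightarrow> j \<in> {1..M} \<and> e \<ge> 1"
  by (auto simp: state_space_def Xp_def Xap_def)

lemma EVf_mono_d:
  assumes i: "i \<in> {1..M}" and ij: "i \<noteq> j" and dd: "d \<le> d'"
    and f: "f (i,j,d+1) \<le> f (i,j,d'+1)"
  shows "EVf i j d a f \<le> EVf i j d' a f"
  unfolding EVf_def
proof (rule sum_mono)
  fix k assume k: "k \<in> {1..M}"
  show "w1 i j a k * (if psi1 i k \<in> state_space M Q then f (psi1 i k) else 0) +
        w2 i j a k * (if psi2 i j d k \<in> state_space M Q then f (psi2 i j d k) else 0)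
     \<le> w1 i j a k * (if psi1 i k \<in> state_space M Q then f (psi1 i k) else 0) +
        w2 i j a k * (if psi2 i j d' k \<in> state_space M Q then f (psi2 i j d' k) else 0)"
  proof (cases "k = i")
    case False
    then show ?thesis by (simp add: psi2_def)
  next
    case True
    show ?thesis
    proof (cases "i \<in> Xap M Q")
      case False
      then have "w2 i j a k = 0" using Qii_zero[OF i] True by (simp add: w2_def)
      then show ?thesis by simp
    next
      case Xa: True
      have "psi2 i j d k = (i,j,d+1)" "psi2 i j d' k = (i,j,d'+1)" using True by (auto simp: psi2_def)
      moreover have "(i,j,d+1) \<in> state_space M Q \<longleftrightarrow> (i,j,d'+1) \<in> state_space M Q"
        using SS_err[OF ij Xa] by simp
      moreover have "w2 i j a k \<ge> 0" using w2_nonneg[OF i k] .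
      ultimately show ?thesis using f by (auto intro: mult_left_mono)
    qed
  qed
qed

lemma VI_mono_d:
  assumes i: "i \<in> {1..M}" and j: "j \<in> {1..M}" and ij: "i \<noteq> j" and b: "beta \<ge> 0"
  shows "d \<le> d' \<Longrightarrow> disc_VI M Q ps D g lam beta n (i,j,d) \<le> disc_VI M Q ps D g lam beta n (i,j,d')"
proof (induction n arbitrary: d d')
  case 0
  then show ?case by simp
next
  case (Suc n)
  have c: "stage_cost D g lam (i,j,d) a \<le> stage_cost D g lam (i,j,d') a" for a
    using D_pos[OF i j ij] monoD[OF g_mono[OF i j ij] Suc.prems] ij
    by (simp add: stage_cost_def state_cost_def)
  have e: "EVf i j d a (disc_VI M Q ps D g lam beta n) \<le> EVf i j d' a (disc_VI M Q ps D g lam beta n)" for a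
    by (rule EVf_mono_d[OF i ij Suc.prems]) (use Suc.IH Suc.prems in simp)
  show ?case unfolding VI_Suc
    using c e b by (intro min.mono add_mono mult_left_mono) auto
qed

lemma pair_bound:
  assumes i: "i \<in> {1..M}" and j: "j \<in> {1..M}" and ij: "i \<noteq> j"
    and b0: "0 \<le> beta" and b1: "beta < 1"
  shows "\<exists>al E. al \<ge> 0 \<and> E \<ge> 0 \<and> (\<forall>d. D i j * g i j d + beta * ((1 - ps) * Q i i) * al * g i j (d + 1) \<le> al * g i j d + E)"
proof -
  define c where "c = beta * ((1 - ps) * Q i i)"
  have c0: "c \<ge> 0" using b0 ps1 Q_nonneg[OF i i] by (simp add: c_def)
  have Dp: "D i j > 0" using D_pos[OF i j ij] .
  have gn: "\<And>d. g i j d \<ge> 0" using g_nonneg[OF i j ij] .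
  have gm: "\<And>d d'. d \<le> d' \<Longrightarrow> g i j d \<le> g i j d'" using monoD[OF g_mono[OF i j ij]] .
  show ?thesis
  proof (cases "c = 0 \<or> (\<forall>d. g i j d = 0)")
    case True
    show ?thesis
      by (rule exI[of _ "D i j"], rule exI[of _ 0]) (use True Dp c_def in auto)
  next
    case False
    then have cp: "c > 0" and "\<exists>d1. g i j d1 \<noteq> 0" using c0 by auto
    then obtain d1 where "g i j d1 \<noteq> 0" by blast
    then have d1: "g i j d1 > 0" using gn[of d1] by linarith
    have "Q i i > 0" using cp b0 ps1 Q_nonneg[OF i i] unfolding c_def
      by (metis mult_zero_right less_eq_real_def)
    then have Xa: "i \<in> Xap M Q" using i by (simp add: Xap_def)
    obtain r where lim: "((\<lambda>d. g i j (d + 1) / g i j d) \<longlongrightarrow> r) sequentially"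
      and r1: "r * (Q i i * (1 - ps)) < 1"
      using growth[OF Xa j] ij by blast
    have r0: "r \<ge> 0"
      by (rule tendsto_lowerbound[OF lim]) (use gn in \<open>auto intro: divide_nonneg_nonneg\<close>)
    have x0: "r * (Q i i * (1 - ps)) \<ge> 0" using r0 Q_nonneg[OF i i] ps1 by simp
    have "c * r = beta * (r * (Q i i * (1 - ps)))" by (simp add: c_def algebra_simps)
    also have "\<dots> \<le> r * (Q i i * (1 - ps))" using x0 b0 b1 by (simp add: mult_left_le_one_le)
    finally have cr: "c * r < 1" using r1 by simp
    define rho where "rho = (r + 1 / c) / 2"
    have rr: "r < rho" using cr cp by (simp add: rho_def field_simps)
    have crho: "c * rho < 1" using cr cp by (simp add: rho_def field_simps)
    have rho0: "rho > 0" using rr r0 by simp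
    from order_tendstoD(2)[OF lim rr] obtain N where N: "\<And>d. d \<ge> N \<Longrightarrow> g i j (d + 1) / g i j d < rho"
      by (auto simp: eventually_sequentially)
    define N2 where "N2 = max N d1"
    have gb: "g i j (d + 1) \<le> rho * g i j d + g i j N2" for d
    proof (cases "d \<ge> N2")
      case True
      then have gp: "g i j d > 0" using gm[of d1 d] d1 by (simp add: N2_def)
      have "g i j (d + 1) / g i j d < rho" using N True by (simp add: N2_def)
      then have "g i j (d + 1) < rho * g i j d" using gp by (simp add: pos_divide_less_eq)
      then show ?thesis using gn[of N2] by simp
    next
      case False
      then have "g i j (d + 1) \<le> g i j N2" using gm by simp
      moreover have "rho * g i j d \<ge> 0" using rho0 gn[of d] by simp
      ultimately show ?thesis by simp
    qed
    define al where "al = D i j / (1 - c * rho)"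
    have al0: "al \<ge> 0" using crho Dp by (simp add: al_def)
    have alD: "al = D i j + c * rho * al" using crho by (simp add: al_def field_simps)
    show ?thesis
    proof (intro exI conjI allI)
      show "al \<ge> 0" by (rule al0)
      show "c * al * g i j N2 \<ge> 0" using c0 al0 gn[of N2] by simp
      fix d
      have "c * al * g i j (d + 1) \<le> c * al * (rho * g i j d + g i j N2)"
        using gb[of d] c0 al0 by (simp add: mult_left_mono)
      then have "D i j * g i j d + c * al * g i j (d + 1) \<le> (D i j + c * rho * al) * g i j d + c * al * g i j N2"
        by (simp add: algebra_simps)
      then show "D i j * g i j d + beta * ((1 - ps) * Q i i) * al * g i j (d + 1) \<le> al * g i j d + c * al * g i j N2"
        using alD by (simp add: c_def)
    qed
  qed
qed

lemma SS_range: "(i,j,d) \<in> state_space M Q \<Longrightarrow> i \<in> {1..M} \<and> j \<in> {1..M} \<and> (i = j \<longrightarrow> d = 0)"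
  by (auto simp: state_space_def Xp_def Xap_def)

lemma aux_eq: "V \<le> l + A \<Longrightarrow> A \<le> B \<Longrightarrow> B \<le> C \<Longrightarrow> C = bK + bP \<Longrightarrow> K = l + bP + E + bK \<Longrightarrow> 0 \<le> E \<Longrightarrow> Ws = K \<Longrightarrow> V \<le> (Ws::real)"
  by linarith

lemma aux_neq: "V \<le> Dg + l + A \<Longrightarrow> A \<le> B \<Longrightarrow> B \<le> C \<Longrightarrow> C = bK + bP + Y \<Longrightarrow> Dg + Y \<le> ag + Ee \<Longrightarrow> Ee \<le> Et \<Longrightarrow> K = l + bP + Et + bK \<Longrightarrow> Ws = K + ag \<Longrightarrow> V \<le> (Ws::real)"
  by linarith

lemma VI_bounded:
  assumes b0: "0 \<le> beta" and b1: "beta < 1"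
  shows "\<exists>W. \<forall>n. \<forall>s\<in>state_space M Q. disc_VI M Q ps D g lam beta n s \<le> W s"
proof -
  let ?P = "\<lambda>i j ae. fst ae \<ge> 0 \<and> snd ae \<ge> 0 \<and> (\<forall>d. D i j * g i j d + beta * ((1 - ps) * Q i i) * fst ae * g i j (d + 1) \<le> fst ae * g i j d + snd ae)"
  have "\<forall>p. \<exists>ae. (fst p \<in> {1..M} \<and> snd p \<in> {1..M} \<and> fst p \<noteq> snd p) \<longrightarrow> ?P (fst p) (snd p) ae"
  proof
    fix p :: "nat \<times> nat"
    show "\<exists>ae. (fst p \<in> {1..M} \<and> snd p \<in> {1..M} \<and> fst p \<noteq> snd p) \<longrightarrow> ?P (fst p) (snd p) ae"
    proof (cases "fst p \<in> {1..M} \<and> snd p \<in> {1..M} \<and> fst p \<noteq> snd p")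
      case True
      then obtain al E where "al \<ge> 0 \<and> E \<ge> 0 \<and> (\<forall>d. D (fst p) (snd p) * g (fst p) (snd p) d + beta * ((1 - ps) * Q (fst p) (fst p)) * al * g (fst p) (snd p) (d + 1) \<le> al * g (fst p) (snd p) d + E)"
        using pair_bound[of "fst p" "snd p" beta] b0 b1 by blast
      then show ?thesis by (intro exI[of _ "(al, E)"]) simp
    qed blast
  qed
  from choice[OF this] obtain Fae where Fae: "\<And>i j. i \<in> {1..M} \<Longrightarrow> j \<in> {1..M} \<Longrightarrow> i \<noteq> j \<Longrightarrow> ?P i j (Fae (i,j))"
    by (metis fst_conv snd_conv)
  define al where "al i j = fst (Fae (i,j))" for i j
  define Ee where "Ee i j = snd (Fae (i,j))" for i j
  have al0: "al i j \<ge> 0" and Ee0: "Ee i j \<ge> 0"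
    and alE: "\<And>d. D i j * g i j d + beta * ((1 - ps) * Q i i) * al i j * g i j (d + 1) \<le> al i j * g i j d + Ee i j"
    if "i \<in> {1..M}" "j \<in> {1..M}" "i \<noteq> j" for i j
    using Fae[OF that] by (auto simp: al_def Ee_def)
  define phi :: "st \<Rightarrow> real" where "phi s = (case s of (k,l,e) \<Rightarrow> if k = l then 0 else al k l * g k l e)" for s
  define Phi1 where "Phi1 = (\<Sum>k\<in>{1..M}. \<Sum>l\<in>{1..M}. phi (k,l,1))"
  define Et where "Et = (\<Sum>k\<in>{1..M}. \<Sum>l\<in>{1..M}. if k = l then 0 else Ee k l)"
  define K where "K = (lam + beta * Phi1 + Et) / (1 - beta)"
  define W where "W s = K + phi s" for s
  have phi_nn: "phi (k,l,e) \<ge> 0" if "k \<in> {1..M}" "l \<in> {1..M}" for k l e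
    using al0[of k l] g_nonneg[of k l e] that by (auto simp: phi_def)
  have Ee_nn: "(if k = l then 0 else Ee k l) \<ge> 0" if "k \<in> {1..M}" "l \<in> {1..M}" for k l
    using Ee0[of k l] that by auto
  have phi1: "phi (k,l,1) \<le> Phi1" if k: "k \<in> {1..M}" and l: "l \<in> {1..M}" for k l
  proof -
    have "phi (k,l,1) \<le> (\<Sum>l\<in>{1..M}. phi (k,l,1))"
      by (rule member_le_sum) (use l phi_nn k in auto)
    also have "\<dots> \<le> Phi1" unfolding Phi1_def
      by (rule member_le_sum) (use k phi_nn in \<open>auto intro: sum_nonneg\<close>)
    finally show ?thesis .
  qed
  have EeEt: "Ee k l \<le> Et" if k: "k \<in> {1..M}" and l: "l \<in> {1..M}" and kl: "k \<noteq> l" for k l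
  proof -
    have "Ee k l = (if k = l then 0 else Ee k l)" using kl by simp
    also have "\<dots> \<le> (\<Sum>l\<in>{1..M}. if k = l then 0 else Ee k l)"
      by (rule member_le_sum) (use l Ee_nn k in auto)
    also have "\<dots> \<le> Et" unfolding Et_def
      by (rule member_le_sum) (use k Ee_nn in \<open>auto intro: sum_nonneg\<close>)
    finally show ?thesis .
  qed
  have Phi0: "Phi1 \<ge> 0" unfolding Phi1_def by (auto intro!: sum_nonneg phi_nn)
  have Et0: "Et \<ge> 0" unfolding Et_def by (intro sum_nonneg) (use Ee_nn in auto)
  have K0: "K \<ge> 0" unfolding K_def using lam b0 b1 Phi0 Et0 by simp
  have KK: "(1 - beta) * K = lam + beta * Phi1 + Et" unfolding K_def using b1 by simp
  have W0: "W s \<ge> 0" if "s \<in> state_space M Q" for s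
    using that K0 phi_nn SS_range unfolding W_def by (cases s) fastforce
  have "\<forall>s\<in>state_space M Q. disc_VI M Q ps D g lam beta n s \<le> W s" for n
  proof (induction n)
    case 0
    then show ?case using W0 by simp
  next
    case (Suc n)
    show ?case
    proof
      fix s assume sS: "s \<in> state_space M Q"
      obtain i j d where s: "s = (i,j,d)" by (cases s) auto
      have i: "i \<in> {1..M}" and j: "j \<in> {1..M}" and ijd: "i = j \<longrightarrow> d = 0"
        using SS_range sS s by auto
      let ?X = "if i \<noteq> j then w2 i j 1 i * phi (i,j,d+1) else 0"
      have step1: "disc_VI M Q ps D g lam beta (Suc n) s \<le> stage_cost D g lam (i,j,d) 1 + beta * EVf i j d 1 (disc_VI M Q ps D g lam beta n)"
        unfolding s VI_Suc by simp
      have step2: "EVf i j d 1 (disc_VI M Q ps D g lam beta n) \<le> EVf i j d 1 W"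
        unfolding EVf_def
        using Suc.IH w1_nonneg[OF i] w2_nonneg[OF i]
        by (intro sum_mono add_mono mult_left_mono) auto
      have pt: "w1 i j 1 k * (if psi1 i k \<in> state_space M Q then W (psi1 i k) else 0)
         + w2 i j 1 k * (if psi2 i j d k \<in> state_space M Q then W (psi2 i j d k) else 0)
         \<le> Q i k * (K + Phi1) + (if k = i then ?X else 0)" if k: "k \<in> {1..M}" for k
      proof -
        have a1: "(if psi1 i k \<in> state_space M Q then W (psi1 i k) else 0) \<le> K + Phi1"
          using phi1[OF k i] K0 Phi0 by (auto simp: psi1_def W_def phi_def)
        have a2: "w2 i j 1 k * (if psi2 i j d k \<in> state_space M Q then W (psi2 i j d k) else 0)
              \<le> w2 i j 1 k * (K + Phi1) + (if k = i then ?X else 0)"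
        proof (cases "i = j")
          case True then show ?thesis by (simp add: w2_def)
        next
          case ij: False
          have w2n: "w2 i j 1 k \<ge> 0" using w2_nonneg[OF i k] .
          show ?thesis
          proof (cases "k = i")
            case True
            have "(if psi2 i j d k \<in> state_space M Q then W (psi2 i j d k) else 0) \<le> K + phi (i,j,d+1)"
              using True K0 phi_nn[OF i j, of "d+1"] by (auto simp: psi2_def W_def)
            then have "w2 i j 1 k * (if psi2 i j d k \<in> state_space M Q then W (psi2 i j d k) else 0) \<le> w2 i j 1 k * (K + phi (i,j,d+1))"
              using w2n by (rule mult_left_mono)
            also have "\<dots> \<le> w2 i j 1 k * (K + Phi1) + w2 i j 1 k * phi (i,j,d+1)"
              using w2n Phi0 by (simp add: algebra_simps)
            finally show ?thesis using True ij by simp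
          next
            case False
            have "(if psi2 i j d k \<in> state_space M Q then W (psi2 i j d k) else 0) \<le> K + Phi1"
              using False phi1[OF k j] K0 Phi0 by (auto simp: psi2_def W_def phi_def)
            then show ?thesis using False w2n by (simp add: mult_left_mono)
          qed
        qed
        have "w1 i j 1 k * (if psi1 i k \<in> state_space M Q then W (psi1 i k) else 0) \<le> w1 i j 1 k * (K + Phi1)"
          using a1 w1_nonneg[OF i k] by (rule mult_left_mono)
        moreover have "w1 i j 1 k + w2 i j 1 k = Q i k" by (simp add: w1_def w2_def algebra_simps)
        then have "Q i k * (K + Phi1) = w1 i j 1 k * (K + Phi1) + w2 i j 1 k * (K + Phi1)"
          by (metis distrib_right)
        ultimately show ?thesis using a2 by linarith
      qed
      have step3: "EVf i j d 1 W \<le> K + Phi1 + ?X"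
      proof -
        have "EVf i j d 1 W \<le> (\<Sum>k\<in>{1..M}. Q i k * (K + Phi1) + (if k = i then ?X else 0))"
          unfolding EVf_def by (rule sum_mono) (rule pt)
        also have "\<dots> = K + Phi1 + ?X"
          using i Q_sum[OF i] by (simp add: sum.distrib sum_distrib_right[symmetric])
        finally show ?thesis .
      qed
      have e1: "beta * EVf i j d 1 (disc_VI M Q ps D g lam beta n) \<le> beta * EVf i j d 1 W"
        using step2 b0 by (simp add: mult_left_mono)
      have Kx: "K = lam + beta * Phi1 + Et + beta * K" using KK by (simp add: algebra_simps)
      show "disc_VI M Q ps D g lam beta (Suc n) s \<le> W s"
      proof (cases "i = j")
        case True
        have st: "stage_cost D g lam (i,j,d) 1 = lam" using True by (simp add: stage_cost_def state_cost_def)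
        have e3: "beta * EVf i j d 1 W \<le> beta * (K + Phi1)"
          using step3 True b0 by (simp add: mult_left_mono)
        have Ws: "W s = K" using True ijd by (simp add: W_def phi_def s)
        have S1: "disc_VI M Q ps D g lam beta (Suc n) s \<le> lam + beta * EVf i j d 1 (disc_VI M Q ps D g lam beta n)"
          using step1 by (simp only: st)
        have e2: "beta * (K + Phi1) = beta * K + beta * Phi1" by (simp add: algebra_simps)
        have XX: "disc_VI M Q ps D g lam beta (Suc n) s \<le> W s" by (rule aux_eq[OF S1 e1 e3 e2 Kx Et0 Ws])
        show ?thesis by (rule XX)
      next
        case ij: False
        have st: "stage_cost D g lam (i,j,d) 1 = D i j * g i j d + lam" using ij by (simp add: stage_cost_def state_cost_def)
        have e3: "beta * EVf i j d 1 W \<le> beta * (K + Phi1 + w2 i j 1 i * phi (i,j,d+1))"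
          using step3 ij b0 by (simp add: mult_left_mono)
        have e4: "beta * (K + Phi1 + w2 i j 1 i * phi (i,j,d+1)) = beta * K + beta * Phi1 + beta * ((1 - ps) * Q i i) * al i j * g i j (d + 1)"
          using ij by (simp add: w2_def phi_def algebra_simps)
        have Ws: "W s = K + al i j * g i j d" using ij by (simp add: W_def phi_def s)
        have a: "D i j * g i j d + beta * ((1 - ps) * Q i i) * al i j * g i j (d + 1) \<le> al i j * g i j d + Ee i j"
          using alE[OF i j ij] .
        have b: "Ee i j \<le> Et" using EeEt[OF i j ij] .
        have S1: "disc_VI M Q ps D g lam beta (Suc n) s \<le> D i j * g i j d + lam + beta * EVf i j d 1 (disc_VI M Q ps D g lam beta n)"
          using step1 by (simp only: st)
        have YY: "disc_VI M Q ps D g lam beta (Suc n) s \<le> W s" by (rule aux_neq[OF S1 e1 e3 e4 a b Kx Ws])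
        show ?thesis by (rule YY)
      qed
    qed
  qed
  note Wn = this
  show ?thesis
    apply (rule exI[of _ W])
    apply (rule allI)
    apply (rule Wn)
    done
qed

end
end

theorem theorem4:
  fixes M :: nat and Q :: "nat \<Rightarrow> nat \<Rightarrow> real" and ps :: real
    and D :: "nat \<Rightarrow> nat \<Rightarrow> real" and g :: "nat \<Rightarrow> nat \<Rightarrow> nat \<Rightarrow> real" and lam :: real
    and L :: real and h :: "st \<Rightarrow> real" and beta :: "nat \<Rightarrow> real" and z :: st
  assumes stoch: "stochastic M Q"
    and irred: "irreducible_chain M Q"
    and ap_ne: "Xap M Q \<noteq> {}"
    and ps: "0 \<le> ps" "ps \<le> 1"
    and D_pos: "\<And>i j. i \<in> {1..M} \<Longrightarrow> j \<in> {1..M} \<Longrightarrow> i \<noteq> j \<Longrightarrow> D i j > 0"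
    and g_nonneg: "\<And>i j d. i \<in> {1..M} \<Longrightarrow> j \<in> {1..M} \<Longrightarrow> i \<noteq> j \<Longrightarrow> g i j d \<ge> 0"
    and g_mono: "\<And>i j. i \<in> {1..M} \<Longrightarrow> j \<in> {1..M} \<Longrightarrow> i \<noteq> j \<Longrightarrow> mono (g i j)"
    and lam: "lam \<ge> 0"
    and growth: "\<And>i j. i \<in> Xap M Q \<Longrightarrow> j \<in> {1..M} \<Longrightarrow> j \<noteq> i \<Longrightarrow>
        \<exists>r. ((\<lambda>d. g i j (d + 1) / g i j d) \<longlongrightarrow> r) sequentially \<and> r * (Q i i * (1 - ps)) < 1"
    and beta: "\<And>n. 0 < beta n \<and> beta n < 1" "beta \<longlonglongrightarrow> 1"
    and z: "z \<in> state_space M Q"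
    and L_lim: "(\<lambda>n. (1 - beta n) * disc_value M Q ps D g lam (beta n) z) \<longlonglongrightarrow> L"
    and h_lim: "\<And>s. s \<in> state_space M Q \<Longrightarrow>
        (\<lambda>n. disc_value M Q ps D g lam (beta n) s - disc_value M Q ps D g lam (beta n) z) \<longlonglongrightarrow> h s"
    and bellman: "\<And>s. s \<in> state_space M Q \<Longrightarrow>
        L + h s = min (bellman_rhs M Q ps D g lam h s 0) (bellman_rhs M Q ps D g lam h s 1)"
  shows "\<forall>i j d d'. i \<noteq> j \<and> (i, j, d) \<in> state_space M Q \<and> (i, j, d') \<in> state_space M Q \<and> d \<le> d'
           \<longrightarrow> h (i, j, d) \<le> h (i, j, d')"
proof (intro allI impI)
  fix i j d d'
  assume H: "i \<noteq> j \<and> (i, j, d) \<in> state_space M Q \<and> (i, j, d') \<in> state_space M Q \<and> d \<le> d'"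
  then have ij: "i \<noteq> j" and s1: "(i, j, d) \<in> state_space M Q" and s2: "(i, j, d') \<in> state_space M Q"
    and dd: "d \<le> d'" by auto
  have i: "i \<in> {1..M}" and j: "j \<in> {1..M}"
    using s1 by (auto simp: state_space_def Xp_def Xap_def)
  have Vle: "disc_value M Q ps D g lam (beta n) (i,j,d) \<le> disc_value M Q ps D g lam (beta n) (i,j,d')" for n
  proof -
    have b0: "0 \<le> beta n" and b1: "beta n < 1" using beta(1)[of n] by auto
    obtain W where W: "\<forall>m. \<forall>s\<in>state_space M Q. disc_VI M Q ps D g lam (beta n) m s \<le> W s"
      using VI_bounded[of M Q ps D g lam, OF stoch ps D_pos g_nonneg g_mono lam growth b0 b1] by blast
    have bdd: "bdd_above (range (\<lambda>m. disc_VI M Q ps D g lam (beta n) m (i,j,d')))"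
      using W s2 by (intro bdd_aboveI[of _ "W (i,j,d')"]) auto
    show ?thesis unfolding disc_value_def
    proof (rule cSUP_mono[OF _ bdd])
      fix m :: nat
      show "\<exists>m'\<in>UNIV. disc_VI M Q ps D g lam (beta n) m (i,j,d) \<le> disc_VI M Q ps D g lam (beta n) m' (i,j,d')"
        using VI_mono_d[of M Q ps D g lam, OF stoch ps D_pos g_nonneg g_mono lam growth i j ij b0 dd] by blast
    qed simp
  qed
  show "h (i, j, d) \<le> h (i, j, d')"
    by (rule LIMSEQ_le[OF h_lim[OF s1] h_lim[OF s2]]) (use Vle in auto)
qed

end
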